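(* If $\Gamma\vdash^A M:\tau$ and $M\to M'$, then $\Gamma\vdash^A M':\tau$.
   Context: Calculus $\lambda^{\triangleright}$. Let $\mathcal{G}$ be a countably infinite set of transition variables $\alpha,\beta,\dots$. A transition (or stage) $A,B$ is a finite sequence of transition variables; $\varepsilon$ is the empty sequence and $AB$ is concatenation. Types: $\tau ::= b \mid \tau\to\tau \mid \triangleright_\alpha\tau \mid \forall\alpha.\tau$ ($b$ ranges over base types; $\alpha$ is bound in $\forall\alpha.\tau$). Terms: $M ::= x \mid M\,M \mid \lambda x{:}\tau.M \mid \blacktriangleright_\alpha M \mid \blacktriangleleft_\alpha M \mid \Lambda\alpha.M \mid M\,A$ (quotation, unquotation, transition abstraction, and instantiation by a transition $A$); $x$ is bound in $\lambda x{:}\tau.M$ and $\alpha$ in $\Lambda\alpha.M$; bound variables are tacitly renamed. For $A=\alpha_1\cdots\alpha_n$ write $\triangleright_A\tau=\triangleright_{\alpha_1}\cdots\triangleright_{\alpha_n}\tau$, $\blacktriangleright_A M=\blacktriangleright_{\alpha_1}\cdots\blacktriangleright_{\alpha_n}M$, and $\blacktriangleleft_A M=\blacktriangleleft_{\alpha_n}\cdots\blacktriangleleft_{\alpha_1}M$ (all three are the identity when $A=\varepsilon$). Capture-avoiding substitution $\tau[\alpha:=B]$, $M[\alpha:=B]$, $A[\alpha:=B]$ of a transition for a transition variable replaces $\alpha$ by $B$ in transitions and replaces $\triangleright_\alpha,\blacktriangleright_\alpha,\blacktriangleleft_\alpha$ by $\triangleright_B,\blacktriangleright_B,\blacktriangleleft_B$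 respectively. $M[x:=N]$ is capture-avoiding term substitution. $\mathrm{FTV}$ denotes free transition variables. A context $\Gamma$ is a finite set $\{x_1:\tau_1@A_1,\dots,x_n:\tau_n@A_n\}$ with distinct $x_i$; $\mathrm{FTV}(\Gamma)=\bigcup_i(\mathrm{FTV}(\tau_i)\cup\mathrm{FTV}(A_i))$. Typing judgments $\Gamma\vdash^A M:\tau$ are derived by: (Var) $x:\tau@A\in\Gamma \Rightarrow \Gamma\vdash^A x:\tau$; (Abs) $\Gamma,x:\tau@A\vdash^A M:\sigma \Rightarrow \Gamma\vdash^A\lambda x{:}\tau.M:\tau\to\sigma$; (App) $\Gamma\vdash^A M:\tau\to\sigma$ and $\Gamma\vdash^A N:\tau$ $\Rightarrow \Gamma\vdash^A M\,N:\sigma$; (Quote) $\Gamma\vdash^{A\alpha}M:\tau \Rightarrow \Gamma\vdash^A\blacktriangleright_\alpha M:\triangleright_\alpha\tau$; (Unquote) $\Gamma\vdash^A M:\triangleright_\alpha\tau \Rightarrow \Gamma\vdash^{A\alpha}\blacktriangleleft_\alpha M:\tau$; (Gen) $\Gamma\vdash^A M:\tau$ and $\alpha\notin\mathrm{FTV}(\Gamma)\cup\mathrm{FTV}(A)$ $\Rightarrow \Gamma\vdash^A\Lambda\alpha.M:\forall\alpha.\tau$; (Ins) $\Gamma\vdash^A M:\forall\alpha.\tau \Rightarrow \Gamma\vdash^A M\,B:\tau[\alpha:=B]$. Reduction $M\to N$ is the least relation closed under all term constructors (reduction may occur anywhere, including under binders and quotations) containing $(\lambda x{:}\tau.M)\,N\to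 M[x:=N]$, $\blacktriangleleft_\alpha\blacktriangleright_\alpha M\to M$, and $(\Lambda\alpha.M)\,A\to M[\alpha:=A]$. *)

theory Defs
  imports Main
begin

text \<open>Calculus lambda-triangle, with de Bruijn indices for both term variables and
transition variables (so alpha-equivalence is syntactic identity).
A transition (stage) is a list of transition-variable indices.\<close>

type_synonym stage = "nat list"

datatype ty =
    Base nat
  | Fun ty ty
  | Later nat ty
  | All ty            (* \<forall>\<alpha>. \<tau>, binds index 0 *)

datatype tm =
    Var nat
  | App tm tm
  | Lam ty tm         (* \<lambda>x:\<tau>. M, binds term index 0 *)
  | Quote nat tm
  | Unquote nat tm
  | TLam tm           (* \<Lambda>\<alpha>. M, binds transition index 0 *)
  | TApp tm stage

definition tshift_var :: "nat \<Rightarrow> nat \<Rightarrow> nat \<Rightarrow> nat" where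
  "tshift_var d c i = (if i < c then i else i + d)"

definition tshift_st :: "nat \<Rightarrow> nat \<Rightarrow> stage \<Rightarrow> stage" where
  "tshift_st d c A = map (tshift_var d c) A"

primrec tshift_ty :: "nat \<Rightarrow> nat \<Rightarrow> ty \<Rightarrow> ty" where
  "tshift_ty d c (Base b) = Base b"
| "tshift_ty d c (Fun t s) = Fun (tshift_ty d c t) (tshift_ty d c s)"
| "tshift_ty d c (Later i t) = Later (tshift_var d c i) (tshift_ty d c t)"
| "tshift_ty d c (All t) = All (tshift_ty d (Suc c) t)"

primrec tshift_tm :: "nat \<Rightarrow> nat \<Rightarrow> tm \<Rightarrow> tm" where
  "tshift_tm d c (Var x) = Var x"
| "tshift_tm d c (App M N) = App (tshift_tm d c M) (tshift_tm d c N)"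
| "tshift_tm d c (Lam t M) = Lam (tshift_ty d c t) (tshift_tm d c M)"
| "tshift_tm d c (Quote i M) = Quote (tshift_var d c i) (tshift_tm d c M)"
| "tshift_tm d c (Unquote i M) = Unquote (tshift_var d c i) (tshift_tm d c M)"
| "tshift_tm d c (TLam M) = TLam (tshift_tm d (Suc c) M)"
| "tshift_tm d c (TApp M A) = TApp (tshift_tm d c M) (tshift_st d c A)"

text \<open>Substituting the transition B for index j (and removing that binder level).\<close>

definition tsubst_var :: "nat \<Rightarrow> stage \<Rightarrow> nat \<Rightarrow> stage" where
  "tsubst_var j B i = (if i = j then B else if j < i then [i - 1] else [i])"

definition tsubst_st :: "nat \<Rightarrow> stage \<Rightarrow> stage \<Rightarrow> stage" where
  "tsubst_st j B A = concat (map (tsubst_var j B) A)"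

definition laters :: "stage \<Rightarrow> ty \<Rightarrow> ty" where
  "laters A t = foldr Later A t"

definition quotes :: "stage \<Rightarrow> tm \<Rightarrow> tm" where
  "quotes A M = foldr Quote A M"

definition unquotes :: "stage \<Rightarrow> tm \<Rightarrow> tm" where
  "unquotes A M = fold Unquote A M"   (* \<blacktriangleleft>_{\<alpha>n} ... \<blacktriangleleft>_{\<alpha>1} M *)

primrec tsubst_ty :: "nat \<Rightarrow> stage \<Rightarrow> ty \<Rightarrow> ty" where
  "tsubst_ty j B (Base b) = Base b"
| "tsubst_ty j B (Fun t s) = Fun (tsubst_ty j B t) (tsubst_ty j B s)"
| "tsubst_ty j B (Later i t) = laters (tsubst_var j B i) (tsubst_ty j B t)"
| "tsubst_ty j B (All t) = All (tsubst_ty (Suc j) (tshift_st 1 0 B) t)"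

primrec tsubst_tm :: "nat \<Rightarrow> stage \<Rightarrow> tm \<Rightarrow> tm" where
  "tsubst_tm j B (Var x) = Var x"
| "tsubst_tm j B (App M N) = App (tsubst_tm j B M) (tsubst_tm j B N)"
| "tsubst_tm j B (Lam t M) = Lam (tsubst_ty j B t) (tsubst_tm j B M)"
| "tsubst_tm j B (Quote i M) = quotes (tsubst_var j B i) (tsubst_tm j B M)"
| "tsubst_tm j B (Unquote i M) = unquotes (tsubst_var j B i) (tsubst_tm j B M)"
| "tsubst_tm j B (TLam M) = TLam (tsubst_tm (Suc j) (tshift_st 1 0 B) M)"
| "tsubst_tm j B (TApp M A) = TApp (tsubst_tm j B M) (tsubst_st j B A)"

primrec shift_tm :: "nat \<Rightarrow> nat \<Rightarrow> tm \<Rightarrow> tm" where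
  "shift_tm d c (Var x) = Var (if x < c then x else x + d)"
| "shift_tm d c (App M N) = App (shift_tm d c M) (shift_tm d c N)"
| "shift_tm d c (Lam t M) = Lam t (shift_tm d (Suc c) M)"
| "shift_tm d c (Quote i M) = Quote i (shift_tm d c M)"
| "shift_tm d c (Unquote i M) = Unquote i (shift_tm d c M)"
| "shift_tm d c (TLam M) = TLam (shift_tm d c M)"
| "shift_tm d c (TApp M A) = TApp (shift_tm d c M) A"

primrec subst_tm :: "nat \<Rightarrow> tm \<Rightarrow> tm \<Rightarrow> tm" where
  "subst_tm j N (Var x) = (if x = j then N else if j < x then Var (x - 1) else Var x)"
| "subst_tm j N (App M1 M2) = App (subst_tm j N M1) (subst_tm j N M2)"
| "subst_tm j N (Lam t M) = Lam t (subst_tm (Suc j) (shift_tm 1 0 N) M)"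
| "subst_tm j N (Quote i M) = Quote i (subst_tm j N M)"
| "subst_tm j N (Unquote i M) = Unquote i (subst_tm j N M)"
| "subst_tm j N (TLam M) = TLam (subst_tm j (tshift_tm 1 0 N) M)"
| "subst_tm j N (TApp M A) = TApp (subst_tm j N M) A"

text \<open>A context is a list of entries (\<tau>, A), entry i describing term variable i.\<close>

type_synonym ctx = "(ty \<times> stage) list"

definition tshift_ctx :: "ctx \<Rightarrow> ctx" where
  "tshift_ctx G = map (\<lambda>(t, A). (tshift_ty 1 0 t, tshift_st 1 0 A)) G"

inductive typing :: "ctx \<Rightarrow> stage \<Rightarrow> tm \<Rightarrow> ty \<Rightarrow> bool" where
  T_Var: "x < length G \<Longrightarrow> G ! x = (t, A) \<Longrightarrow> typing G A (Var x) t"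
| T_Abs: "typing ((t, A) # G) A M s \<Longrightarrow> typing G A (Lam t M) (Fun t s)"
| T_App: "typing G A M (Fun t s) \<Longrightarrow> typing G A N t \<Longrightarrow> typing G A (App M N) s"
| T_Quote: "typing G (A @ [a]) M t \<Longrightarrow> typing G A (Quote a M) (Later a t)"
| T_Unquote: "typing G A M (Later a t) \<Longrightarrow> typing G (A @ [a]) (Unquote a M) t"
| T_Gen: "typing (tshift_ctx G) (tshift_st 1 0 A) M t \<Longrightarrow> typing G A (TLam M) (All t)"
| T_Ins: "typing G A M (All t) \<Longrightarrow> typing G A (TApp M B) (tsubst_ty 0 B t)"

inductive red :: "tm \<Rightarrow> tm \<Rightarrow> bool" where
  R_Beta: "red (App (Lam t M) N) (subst_tm 0 N M)"
| R_Quote: "red (Unquote a (Quote a M)) M"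
| R_TBeta: "red (TApp (TLam M) A) (tsubst_tm 0 A M)"
| R_AppL: "red M M' \<Longrightarrow> red (App M N) (App M' N)"
| R_AppR: "red N N' \<Longrightarrow> red (App M N) (App M N')"
| R_Lam: "red M M' \<Longrightarrow> red (Lam t M) (Lam t M')"
| R_Quo: "red M M' \<Longrightarrow> red (Quote a M) (Quote a M')"
| R_Unq: "red M M' \<Longrightarrow> red (Unquote a M) (Unquote a M')"
| R_TLam: "red M M' \<Longrightarrow> red (TLam M) (TLam M')"
| R_TApp: "red M M' \<Longrightarrow> red (TApp M A) (TApp M' A)"

end

theory Submission
  imports Defs
begin

lemma laters_append[simp]: "laters (X @ Y) t = laters X (laters Y t)"
  by (simp add: laters_def)
lemma laters_simps[simp]: "laters [] t = t" "laters (a # X) t = Later a (laters X t)"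
  by (simp_all add: laters_def)

lemma tshift_st_simps[simp]:
  "tshift_st d c [] = []" "tshift_st d c (a # X) = tshift_var d c a # tshift_st d c X"
  "tshift_st d c (X @ Y) = tshift_st d c X @ tshift_st d c Y"
  by (simp_all add: tshift_st_def)

lemma tsubst_st_simps[simp]:
  "tsubst_st j B [] = []" "tsubst_st j B (a # X) = tsubst_var j B a @ tsubst_st j B X"
  "tsubst_st j B (X @ Y) = tsubst_st j B X @ tsubst_st j B Y"
  by (simp_all add: tsubst_st_def)

lemma tshift_laters[simp]: "tshift_ty d c (laters D t) = laters (tshift_st d c D) (tshift_ty d c t)"
  by (induct D) auto

lemma tsubst_laters[simp]: "tsubst_ty j B (laters D t) = laters (tsubst_st j B D) (tsubst_ty j B t)"
  by (induct D) auto

lemma shift_shift_st: "c' \<le> c \<Longrightarrow> tshift_st (Suc 0) (Suc c) (tshift_st (Suc 0) c' A) = tshift_st (Suc 0) c' (tshift_st (Suc 0) c A)"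
  by (induct A) (auto simp: tshift_var_def)

lemma shift_shift_ty: "c' \<le> c \<Longrightarrow> tshift_ty (Suc 0) (Suc c) (tshift_ty (Suc 0) c' t) = tshift_ty (Suc 0) c' (tshift_ty (Suc 0) c t)"
  by (induct t arbitrary: c c') (auto simp: tshift_var_def)

lemma shift_subst_var: "j \<le> c \<Longrightarrow> tshift_st (Suc 0) c (tsubst_var j B i) = tsubst_var j (tshift_st (Suc 0) c B) (tshift_var (Suc 0) (Suc c) i)"
  by (auto simp: tshift_var_def tsubst_var_def)

lemma shift_subst_st: "j \<le> c \<Longrightarrow> tshift_st (Suc 0) c (tsubst_st j B A) = tsubst_st j (tshift_st (Suc 0) c B) (tshift_st (Suc 0) (Suc c) A)"
  by (induct A) (auto simp: shift_subst_var)

lemma shift_subst_ty: "j \<le> c \<Longrightarrow> tshift_ty (Suc 0) c (tsubst_ty j B t) = tsubst_ty j (tshift_st (Suc 0) c B) (tshift_ty (Suc 0) (Suc c) t)"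
proof (induct t arbitrary: j c B)
  case (Later i t) then show ?case by (simp add: shift_subst_var)
next
  case (All t) then show ?case by (simp add: shift_shift_st)
qed auto

lemma subst_shift_st: "tsubst_st c C (tshift_st (Suc 0) c A) = A"
  by (induct A) (auto simp: tshift_var_def tsubst_var_def)

lemma subst_shift_ty: "tsubst_ty c C (tshift_ty (Suc 0) c t) = t"
  by (induct t arbitrary: c C) (auto simp: tshift_var_def tsubst_var_def)

lemma subst_shift2_var: "c \<le> j \<Longrightarrow> tsubst_var (Suc j) (tshift_st (Suc 0) c B) (tshift_var (Suc 0) c i) = tshift_st (Suc 0) c (tsubst_var j B i)"
  by (auto simp: tshift_var_def tsubst_var_def)

lemma subst_shift2_st: "c \<le> j \<Longrightarrow> tsubst_st (Suc j) (tshift_st (Suc 0) c B) (tshift_st (Suc 0) c A) = tshift_st (Suc 0) c (tsubst_st j B A)"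
  by (induct A) (auto simp: subst_shift2_var)

lemma subst_shift2_ty: "c \<le> j \<Longrightarrow> tsubst_ty (Suc j) (tshift_st (Suc 0) c B) (tshift_ty (Suc 0) c t) = tshift_ty (Suc 0) c (tsubst_ty j B t)"
proof (induct t arbitrary: j c B)
  case (Later i t) then show ?case by (simp add: subst_shift2_var)
next
  case (All t)
  have "tshift_st (Suc 0) 0 (tshift_st (Suc 0) c B) = tshift_st (Suc 0) (Suc c) (tshift_st (Suc 0) 0 B)"
    by (simp add: shift_shift_st)
  with All show ?case by simp
qed auto

lemma subst_subst_var: "i \<le> j \<Longrightarrow> tsubst_st j B (tsubst_var i C k) = tsubst_st i (tsubst_st j B C) (tsubst_var (Suc j) (tshift_st (Suc 0) i B) k)"
  by (auto simp: tsubst_var_def subst_shift_st)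

lemma subst_subst_st: "i \<le> j \<Longrightarrow> tsubst_st j B (tsubst_st i C A) = tsubst_st i (tsubst_st j B C) (tsubst_st (Suc j) (tshift_st (Suc 0) i B) A)"
  by (induct A) (auto simp: subst_subst_var)

lemma subst_subst_ty: "i \<le> j \<Longrightarrow> tsubst_ty j B (tsubst_ty i C t) = tsubst_ty i (tsubst_st j B C) (tsubst_ty (Suc j) (tshift_st (Suc 0) i B) t)"
proof (induct t arbitrary: i j B C)
  case (Later k t) then show ?case by (simp add: subst_subst_var)
next
  case (All t)
  have "tshift_st (Suc 0) 0 (tsubst_st j B C) = tsubst_st (Suc j) (tshift_st (Suc 0) 0 B) (tshift_st (Suc 0) 0 C)"
    by (simp add: subst_shift2_st)
  moreover have "tshift_st (Suc 0) (Suc i) (tshift_st (Suc 0) 0 B) = tshift_st (Suc 0) 0 (tshift_st (Suc 0) i B)"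
    by (simp add: shift_shift_st)
  ultimately show ?case using All by simp
qed auto

lemma quotes_typing: "typing G (A @ C) M t \<Longrightarrow> typing G A (quotes C M) (laters C t)"
proof (induct C arbitrary: A)
  case Nil then show ?case by (simp add: quotes_def)
next
  case (Cons c C)
  have "typing G (A @ [c]) (quotes C M) (laters C t)" using Cons by simp
  then show ?case by (simp add: quotes_def typing.T_Quote)
qed

lemma unquotes_typing: "typing G A M (laters C t) \<Longrightarrow> typing G (A @ C) (unquotes C M) t"
proof (induct C arbitrary: A M)
  case Nil then show ?case by (simp add: unquotes_def)
next
  case (Cons c C)
  have "typing G (A @ [c]) (Unquote c M) (laters C t)" using Cons(2) by (simp add: typing.T_Unquote)
  from Cons(1)[OF this] show ?case by (simp add: unquotes_def)
qed

definition tshift_ctxc :: "nat \<Rightarrow> ctx \<Rightarrow> ctx" where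
  "tshift_ctxc c G = map (\<lambda>(t, A). (tshift_ty (Suc 0) c t, tshift_st (Suc 0) c A)) G"

definition tsubst_ctx :: "nat \<Rightarrow> stage \<Rightarrow> ctx \<Rightarrow> ctx" where
  "tsubst_ctx j B G = map (\<lambda>(t, A). (tsubst_ty j B t, tsubst_st j B A)) G"

lemma tshift_typing:
  "typing G A M t \<Longrightarrow> typing (tshift_ctxc c G) (tshift_st (Suc 0) c A) (tshift_tm (Suc 0) c M) (tshift_ty (Suc 0) c t)"
proof (induct arbitrary: c rule: typing.induct)
  case (T_Var x G t A)
  then show ?case by (auto simp: tshift_ctxc_def intro!: typing.T_Var)
next
  case (T_Abs t A G M s) then show ?case by (auto simp: tshift_ctxc_def intro!: typing.T_Abs)
next
  case (T_App G A M t s N) then show ?case by (auto intro: typing.T_App)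
next
  case (T_Quote G A a M t) then show ?case by (auto intro: typing.T_Quote)
next
  case (T_Unquote G A M a t)
  then show ?case using typing.T_Unquote by fastforce
next
  case (T_Gen G A M t)
  have e1: "tshift_ctxc (Suc c) (tshift_ctx G) = tshift_ctx (tshift_ctxc c G)"
    by (auto simp: tshift_ctxc_def tshift_ctx_def shift_shift_st shift_shift_ty)
  have e2: "tshift_st (Suc 0) (Suc c) (tshift_st (Suc 0) 0 A) = tshift_st (Suc 0) 0 (tshift_st (Suc 0) c A)"
    by (simp add: shift_shift_st)
  from T_Gen(2)[of "Suc c"] show ?case by (simp add: e1 e2 typing.T_Gen)
next
  case (T_Ins G A M t B)
  from typing.T_Ins[OF T_Ins(2)[of c, simplified], of "tshift_st (Suc 0) c B"] show ?case by (simp add: shift_subst_ty)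
qed

lemma tsubst_typing:
  "typing G A M t \<Longrightarrow> typing (tsubst_ctx j B G) (tsubst_st j B A) (tsubst_tm j B M) (tsubst_ty j B t)"
proof (induct arbitrary: j B rule: typing.induct)
  case (T_Var x G t A)
  then show ?case by (auto simp: tsubst_ctx_def intro!: typing.T_Var)
next
  case (T_Abs t A G M s) then show ?case by (auto simp: tsubst_ctx_def intro!: typing.T_Abs)
next
  case (T_App G A M t s N) then show ?case
    using typing.T_App[OF T_App(2)[of j B, simplified] T_App(4)[of j B]] by simp
next
  case (T_Quote G A a M t) then show ?case by (auto intro: quotes_typing)
next
  case (T_Unquote G A M a t)
  then show ?case using unquotes_typing by fastforce
next
  case (T_Gen G A M t)
  have e1: "tsubst_ctx (Suc j) (tshift_st (Suc 0) 0 B) (tshift_ctx G) = tshift_ctx (tsubst_ctx j B G)"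
    by (auto simp: tsubst_ctx_def tshift_ctx_def subst_shift2_st subst_shift2_ty)
  have e2: "tsubst_st (Suc j) (tshift_st (Suc 0) 0 B) (tshift_st (Suc 0) 0 A) = tshift_st (Suc 0) 0 (tsubst_st j B A)"
    by (simp add: subst_shift2_st)
  from T_Gen(2)[of "Suc j" "tshift_st (Suc 0) 0 B"] show ?case by (simp add: e1 e2 typing.T_Gen)
next
  case (T_Ins G A M t C)
  from typing.T_Ins[OF T_Ins(2)[of j B, simplified], of "tsubst_st j B C"] show ?case
    by (simp add: subst_subst_ty)
qed

lemma weaken_typing:
  "typing G A M t \<Longrightarrow> k \<le> length G \<Longrightarrow> typing (take k G @ e # drop k G) A (shift_tm (Suc 0) k M) t"
proof (induct arbitrary: k e rule: typing.induct)
  case (T_Var x G t A)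
  then show ?case
    by (auto intro!: typing.T_Var simp: nth_append min_def)
next
  case (T_Abs t A G M s)
  from T_Abs(2)[of "Suc k" e] T_Abs(3) show ?case by (auto intro!: typing.T_Abs)
next
  case (T_App G A M t s N) then show ?case
    using typing.T_App[OF T_App(2)[OF T_App(5)] T_App(4)[OF T_App(5)]] by simp
next
  case (T_Quote G A a M t) then show ?case
    using typing.T_Quote[OF T_Quote(2)[OF T_Quote(3)]] by simp
next
  case (T_Unquote G A M a t)
  then show ?case using typing.T_Unquote by fastforce
next
  case (T_Gen G A M t)
  have "k \<le> length (tshift_ctx G)" using T_Gen by (simp add: tshift_ctx_def)
  from T_Gen(2)[OF this, of "(\<lambda>(t, A). (tshift_ty (Suc 0) 0 t, tshift_st (Suc 0) 0 A)) e"]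
  show ?case by (auto simp: tshift_ctx_def take_map drop_map intro!: typing.T_Gen split: prod.splits)
next
  case (T_Ins G A M t B) then show ?case
    using typing.T_Ins[OF T_Ins(2)[OF T_Ins(3)]] by simp
qed

lemma subst_typing:
  "typing G B M t \<Longrightarrow> j < length G \<Longrightarrow> G ! j = (s, A) \<Longrightarrow>
   typing (take j G @ drop (Suc j) G) A N s \<Longrightarrow>
   typing (take j G @ drop (Suc j) G) B (subst_tm j N M) t"
proof (induct arbitrary: j N s A rule: typing.induct)
  case (T_Var x G t B)
  show ?case
  proof (cases "x = j")
    case True then show ?thesis using T_Var by simp
  next
    case False
    then show ?thesis using T_Var
      by (auto intro!: typing.T_Var simp: nth_append min_def)
  qed
next
  case (T_Abs t B G M s')
  have "typing (take 0 (take j G @ drop (Suc j) G) @ (t, B) # drop 0 (take j G @ drop (Suc j) G)) A (shift_tm (Suc 0) 0 N) s"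
    by (rule weaken_typing[OF T_Abs(5)]) simp
  then have "typing ((t, B) # take j G @ drop (Suc j) G) A (shift_tm (Suc 0) 0 N) s" by simp
  with T_Abs(2)[of "Suc j" s A "shift_tm (Suc 0) 0 N"] T_Abs(3,4) show ?case
    by (auto intro!: typing.T_Abs)
next
  case (T_App G A' M t s' N') then show ?case
    using typing.T_App[OF T_App(2)[OF T_App(5,6,7)] T_App(4)[OF T_App(5,6,7)]] by simp
next
  case (T_Quote G A a M t) then show ?case by (auto intro: typing.T_Quote)
next
  case (T_Unquote G A M a t)
  then show ?case using typing.T_Unquote by fastforce
next
  case (T_Gen G B M t)
  have c0: "tshift_ctxc 0 = tshift_ctx" by (simp add: tshift_ctxc_def tshift_ctx_def fun_eq_iff)
  have rm: "tshift_ctx (take j G @ drop (Suc j) G) = take j (tshift_ctx G) @ drop (Suc j) (tshift_ctx G)"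
    by (simp add: tshift_ctx_def take_map drop_map)
  have "typing (tshift_ctx (take j G @ drop (Suc j) G)) (tshift_st (Suc 0) 0 A) (tshift_tm (Suc 0) 0 N) (tshift_ty (Suc 0) 0 s)"
    using tshift_typing[OF T_Gen(5), of 0] by (simp add: c0)
  then have "typing (take j (tshift_ctx G) @ drop (Suc j) (tshift_ctx G)) (tshift_st (Suc 0) 0 A) (tshift_tm (Suc 0) 0 N) (tshift_ty (Suc 0) 0 s)"
    by (simp add: rm)
  moreover have "j < length (tshift_ctx G)" "tshift_ctx G ! j = (tshift_ty (Suc 0) 0 s, tshift_st (Suc 0) 0 A)"
    using T_Gen(3,4) by (auto simp: tshift_ctx_def)
  ultimately have "typing (take j (tshift_ctx G) @ drop (Suc j) (tshift_ctx G)) (tshift_st (Suc 0) 0 B) (subst_tm j (tshift_tm (Suc 0) 0 N) M) t"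
    using T_Gen(2)[of j "tshift_ty (Suc 0) 0 s" "tshift_st (Suc 0) 0 A" "tshift_tm (Suc 0) 0 N"] by simp
  then show ?case by (simp add: rm[symmetric] typing.T_Gen)
next
  case (T_Ins G A M t B) then show ?case by (auto intro: typing.T_Ins)
qed

inductive_cases inv_App: "typing G A (App M N) t"
inductive_cases inv_Lam: "typing G A (Lam s M) t"
inductive_cases inv_Quote: "typing G A (Quote a M) t"
inductive_cases inv_Unquote: "typing G A (Unquote a M) t"
inductive_cases inv_TLam: "typing G A (TLam M) t"
inductive_cases inv_TApp: "typing G A (TApp M B) t"

theorem mainTheorem2:
  assumes "typing G A M t"
    and "red M M'"
  shows "typing G A M' t"
  using assms(2,1)
proof (induct arbitrary: G A t rule: red.induct)
  case (R_Beta s M N)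
  then obtain t' where h1: "typing G A (Lam s M) (Fun t' t)" and h2: "typing G A N t'"
    by (auto elim: inv_App)
  from h1 have "s = t'" "typing ((s, A) # G) A M t" by (auto elim: inv_Lam)
  from subst_typing[OF this(2), of 0 s A N] h2 \<open>s = t'\<close> show ?case by simp
next
  case (R_Quote a M)
  then show ?case by (auto elim!: inv_Unquote inv_Quote)
next
  case (R_TBeta M C)
  then obtain t0 where "t = tsubst_ty 0 C t0" "typing G A (TLam M) (All t0)"
    by (auto elim: inv_TApp)
  then have h: "typing (tshift_ctx G) (tshift_st (Suc 0) 0 A) M t0" by (auto elim: inv_TLam)
  have "tsubst_ctx 0 C (tshift_ctx G) = G"
    by (induct G) (auto simp: tsubst_ctx_def tshift_ctx_def subst_shift_st subst_shift_ty)
  with tsubst_typing[OF h, of 0 C] \<open>t = _\<close> show ?case by (simp add: subst_shift_st)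
next
  case (R_AppL M M' N) then show ?case by (auto elim!: inv_App intro: typing.T_App)
next
  case (R_AppR N N' M) then show ?case by (auto elim!: inv_App intro: typing.T_App)
next
  case (R_Lam M M' s) then show ?case by (auto elim!: inv_Lam intro: typing.T_Abs)
next
  case (R_Quo M M' a) then show ?case by (auto elim!: inv_Quote intro: typing.T_Quote)
next
  case (R_Unq M M' a) then show ?case by (auto elim!: inv_Unquote intro: typing.T_Unquote)
next
  case (R_TLam M M') then show ?case by (auto elim!: inv_TLam intro: typing.T_Gen)
next
  case (R_TApp M M' B) then show ?case by (auto elim!: inv_TApp intro: typing.T_Ins)
qed

end
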